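(* Let $\mathcal{D}$ be an abstract system of proof notations and $s\in\mathbb{N}$. If $\mathcal{D}$ is $s$-bounded, then for every $d\in\mathbb{E}(\mathcal{D})$ we have $|d|\le\vartheta_d(s)$.
   Context: An abstract system of proof notations is a set $\mathcal{D}$ with functions $|\cdot|,o(\cdot)\colon\mathcal{D}\to\mathbb{N}\setminus\{0\}$ (size and height) and a relation $\to\subseteq\mathcal{D}\times\mathcal{D}$ such that $d\to d'$ implies $o(d')<o(d)$. The cut-elimination closure $\mathbb{E}(\mathcal{D})$ is the abstract system of formal terms inductively generated by: every $d\in\mathcal{D}$ is in $\mathbb{E}(\mathcal{D})$ (with size and height inherited); if $d,e\in\mathbb{E}(\mathcal{D})$ then $\mathsf{I}d,\ \mathsf{R}de,\ \mathsf{E}d\in\mathbb{E}(\mathcal{D})$ ($\mathsf I,\mathsf R,\mathsf E$ new symbols), with $|\mathsf Id|=|d|+1$, $|\mathsf Rde|=|d|+|e|+1$, $|\mathsf Ed|=|d|+1$, $o(\mathsf Id)=o(d)$, $o(\mathsf Rde)=o(d)+o(e)$, $o(\mathsf Ed)=2^{o(d)}-1$. The relation $\to$ on $\mathbb{E}(\mathcal{D})$ is inductively generated by: $d\to d'$ in $\mathcal{D}$ implies $d\to d'$; $d\to d'$ implies $\mathsf Id\to\mathsf Id'$; $e\to e'$ implies $\mathsf Rde\to\mathsf Rde'$; $d\to d'$ implies $\mathsf Ed\to\mathsf Ed'$; $\mathsf Rde\to\mathsf Id$ always; and $d\to d'$ together with $d\to d''$ implies $\mathsf Ed\to\mathsf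 R(\mathsf Ed')(\mathsf Ed'')$. The size function $\vartheta_d\colon\mathbb{N}\to\mathbb{N}$ for $d\in\mathbb{E}(\mathcal{D})$ is defined by recursion: $\vartheta_d(s)=s$ for $d\in\mathcal{D}$; $\vartheta_{\mathsf Id}(s)=\vartheta_d(s)+1$; $\vartheta_{\mathsf Rde}(s)=\max\{|d|+1+\vartheta_e(s),\ \vartheta_d(s)+1\}$; $\vartheta_{\mathsf Ed}(s)=o(d)\cdot(\vartheta_d(s)+2)$. $\mathcal{D}$ is called $s$-bounded if $|d|\le s$ for all $d\in\mathcal{D}$. *)

theory Defs
  imports Main
begin

definition abstract_system ::
  "'a set \<Rightarrow> ('a \<Rightarrow> nat) \<Rightarrow> ('a \<Rightarrow> nat) \<Rightarrow> ('a \<Rightarrow> 'a \<Rightarrow> bool) \<Rightarrow> bool" where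
  "abstract_system D sz ht step \<longleftrightarrow>
     (\<forall>d\<in>D. sz d > 0 \<and> ht d > 0) \<and>
     (\<forall>d d'. step d d' \<longrightarrow> d \<in> D \<and> d' \<in> D \<and> ht d' < ht d)"

definition s_bounded :: "'a set \<Rightarrow> ('a \<Rightarrow> nat) \<Rightarrow> nat \<Rightarrow> bool" where
  "s_bounded D sz s \<longleftrightarrow> (\<forall>d\<in>D. sz d \<le> s)"

datatype 'a eterm = Base 'a | ITm "'a eterm" | RTm "'a eterm" "'a eterm" | ETm "'a eterm"

inductive_set cutclosure :: "'a set \<Rightarrow> 'a eterm set" for D where
  base: "d \<in> D \<Longrightarrow> Base d \<in> cutclosure D"
| I: "d \<in> cutclosure D \<Longrightarrow> ITm d \<in> cutclosure D"
| R: "d \<in> cutclosure D \<Longrightarrow> e \<in> cutclosure D \<Longrightarrow> RTm d e \<in> cutclosure D"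
| E: "d \<in> cutclosure D \<Longrightarrow> ETm d \<in> cutclosure D"

fun esize :: "('a \<Rightarrow> nat) \<Rightarrow> 'a eterm \<Rightarrow> nat" where
  "esize sz (Base d) = sz d"
| "esize sz (ITm d) = esize sz d + 1"
| "esize sz (RTm d e) = esize sz d + esize sz e + 1"
| "esize sz (ETm d) = esize sz d + 1"

fun eheight :: "('a \<Rightarrow> nat) \<Rightarrow> 'a eterm \<Rightarrow> nat" where
  "eheight ht (Base d) = ht d"
| "eheight ht (ITm d) = eheight ht d"
| "eheight ht (RTm d e) = eheight ht d + eheight ht e"
| "eheight ht (ETm d) = 2 ^ eheight ht d - 1"

inductive estep :: "('a \<Rightarrow> 'a \<Rightarrow> bool) \<Rightarrow> 'a eterm \<Rightarrow> 'a eterm \<Rightarrow> bool" for step where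
  base: "step d d' \<Longrightarrow> estep step (Base d) (Base d')"
| I: "estep step d d' \<Longrightarrow> estep step (ITm d) (ITm d')"
| R: "estep step e e' \<Longrightarrow> estep step (RTm d e) (RTm d e')"
| E: "estep step d d' \<Longrightarrow> estep step (ETm d) (ETm d')"
| RI: "estep step (RTm d e) (ITm d)"
| ER: "estep step d d' \<Longrightarrow> estep step d d'' \<Longrightarrow> estep step (ETm d) (RTm (ETm d') (ETm d''))"

fun theta :: "('a \<Rightarrow> nat) \<Rightarrow> ('a \<Rightarrow> nat) \<Rightarrow> 'a eterm \<Rightarrow> nat \<Rightarrow> nat" where
  "theta sz ht (Base d) s = s"
| "theta sz ht (ITm d) s = theta sz ht d s + 1"
| "theta sz ht (RTm d e) s = max (esize sz d + 1 + theta sz ht e s) (theta sz ht d s + 1)"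
| "theta sz ht (ETm d) s = eheight ht d * (theta sz ht d s + 2)"

end

theory Submission
  imports Defs
begin

lemma aux:
  assumes "abstract_system D sz ht step" and "s_bounded D sz s"
  shows "d \<in> cutclosure D \<Longrightarrow> eheight ht d > 0 \<and> esize sz d \<le> theta sz ht d s"
proof (induction d rule: cutclosure.induct)
  case (base d) thus ?case using assms by (auto simp: abstract_system_def s_bounded_def)
next
  case (I d) thus ?case by auto
next
  case (R d e) thus ?case by auto
next
  case (E d)
  then have h: "eheight ht d \<ge> 1" by auto
  have "(2::nat) ^ eheight ht d \<ge> 2 ^ 1" using h by (rule power_increasing) auto
  hence p: "2 ^ eheight ht d - 1 > (0::nat)" by simp
  have "esize sz d + 1 \<le> 1 * (theta sz ht d s + 2)" using E by simp
  also have "\<dots> \<le> eheight ht d * (theta sz ht d s + 2)" using h by (rule mult_right_mono) simp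
  finally show ?case using p by simp
qed

theorem mainTheorem4:
  fixes D :: "'a set" and sz ht :: "'a \<Rightarrow> nat" and step :: "'a \<Rightarrow> 'a \<Rightarrow> bool" and s :: nat
  assumes "abstract_system D sz ht step"
    and "s_bounded D sz s"
  shows "\<forall>d\<in>cutclosure D. esize sz d \<le> theta sz ht d s"
  using aux[OF assms] by blast

end
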